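(* Assume $k_{+\infty}=k_{-\infty}=:k_\infty$. For every twice continuously differentiable $J:\mathbb{R}\to(0,\infty)$ with $J(x)\to1$ as $x\to\pm\infty$, $$T\ \ge\ \mathrm{sech}^2\left\{\frac12\int_{-\infty}^{\infty}\left|\frac{J^2}{k_\infty}\left\{k^2+\frac{J''}{J}\right\}-\frac{k_\infty}{J^2}\right|\mathrm{d}x\right\}.$$
   Context: Standing setup: $k^2:\mathbb{R}\to\mathbb{R}$ is a piecewise continuous function (it may be negative somewhere) with $k^2(x)\to k_{\pm\infty}^2$ as $x\to\pm\infty$, where $k_{\pm\infty}>0$ and $k^2-k_{\pm\infty}^2$ is integrable near $\pm\infty$. For the equation $u''+k^2(x)u=0$ there is a solution with $u(x)=e^{ik_{-\infty}x}+r\,e^{-ik_{-\infty}x}+o(1)$ as $x\to-\infty$ and $u(x)=\tau\,e^{ik_{+\infty}x}+o(1)$ as $x\to+\infty$; the transmission probability is $T=(k_{+\infty}/k_{-\infty})|\tau|^2$. Here $\mathrm{sech}=1/\cosh$, and if the integral equals $+\infty$ the bound is read as the trivial statement $T\ge 0$. *)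

theory Defs
  imports "HOL-Analysis.Analysis"
begin

definition sech :: "real \<Rightarrow> real" where
  "sech x = 1 / cosh x"

definition piecewise_continuous :: "(real \<Rightarrow> real) \<Rightarrow> bool" where
  "piecewise_continuous f \<longleftrightarrow>
     (\<exists>S. (\<forall>a b. finite (S \<inter> {a..b})) \<and>
          (\<forall>x. x \<notin> S \<longrightarrow> isCont f x) \<and>
          (\<forall>x\<in>S. (\<exists>l. (f \<longlongrightarrow> l) (at_left x)) \<and> (\<exists>l. (f \<longlongrightarrow> l) (at_right x))))"

text \<open>u is a (Caratheodory) solution of u'' + q u = 0: u is C^1 with derivative du,
  and du is the indefinite integral of -q u.\<close>
definition schrod_solution :: "(real \<Rightarrow> real) \<Rightarrow> (real \<Rightarrow> complex) \<Rightarrow> (real \<Rightarrow> complex) \<Rightarrow> bool" where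
  "schrod_solution q u du \<longleftrightarrow>
     (\<forall>x. (u has_vector_derivative du x) (at x)) \<and> continuous_on UNIV du \<and>
     (\<forall>a b. a \<le> b \<longrightarrow>
        ((\<lambda>t. - (complex_of_real (q t) * u t)) has_integral (du b - du a)) {a..b})"

end

theory Submission
  imports Defs
begin


lemma taylor1_est:
  fixes E E' :: "real \<Rightarrow> complex"
  assumes dE: "\<And>x. (E has_vector_derivative E' x) (at x)"
    and h: "0 < h"
    and lip: "\<forall>s\<in>{t..t+h}. norm (E' s - E' t) \<le> L * (s - t)"
    and L: "0 \<le> L"
  shows "norm (E (t+h) - E t - h *\<^sub>R E' t) \<le> L * h * h"
proof -
  have i1: "(E' has_integral (E (t+h) - E t)) {t..t+h}"
    by (rule fundamental_theorem_of_calculus) (use h in \<open>auto intro: has_vector_derivative_at_within dE\<close>)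
  have i2: "((\<lambda>s. E' t) has_integral (h *\<^sub>R E' t)) {t..t+h}"
    using has_integral_const_real[of "E' t" t "t+h"] h by (simp add: content_real)
  have i3: "((\<lambda>s. E' s - E' t) has_integral (E (t+h) - E t - h *\<^sub>R E' t)) (cbox t (t+h))"
    using has_integral_diff[OF i1 i2] by simp
  have "norm (E (t+h) - E t - h *\<^sub>R E' t) \<le> (L*h) * measure lborel (cbox t (t+h))"
  proof (rule has_integral_bound[OF _ i3])
    show "0 \<le> L * h" using L h by simp
    fix s assume "s \<in> cbox t (t+h)"
    then have "s \<in> {t..t+h}" by simp
    then have "norm (E' s - E' t) \<le> L * (s - t)" using lip by blast
    also have "\<dots> \<le> L * h" using \<open>s \<in> {t..t+h}\<close> L by (intro mult_left_mono) auto
    finally show "norm (E' s - E' t) \<le> L * h" .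
  qed
  then show ?thesis using h by (simp add: content_real)
qed

lemma deriv_tendsto_zero:
  fixes E E' :: "real \<Rightarrow> complex" and F :: "real filter"
  assumes dE: "\<And>x. (E has_vector_derivative E' x) (at x)"
    and lim: "\<And>h. ((\<lambda>t. E (t+h)) \<longlongrightarrow> 0) F"
    and L: "L > 0"
    and lip: "eventually (\<lambda>t. \<forall>s\<in>{t..t+1}. norm (E' s - E' t) \<le> L * (s - t)) F"
  shows "(E' \<longlongrightarrow> 0) F"
proof (rule tendstoI)
  fix e :: real assume e: "e > 0"
  define h where "h = min 1 (e / (4*L))"
  have h0: "h > 0" and h1: "h \<le> 1" and hL: "L * h \<le> e/4"
    using e L by (auto simp: h_def min_def field_simps)
  define d where "d = e * h / 4"
  have d0: "d > 0" using e h0 by (simp add: d_def)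
  have ev1: "eventually (\<lambda>t. dist (E (t+h)) 0 < d) F" using lim[of h] d0 by (rule tendstoD)
  have ev2: "eventually (\<lambda>t. dist (E (t+0)) 0 < d) F" using lim[of 0] d0 by (rule tendstoD)
  show "eventually (\<lambda>t. dist (E' t) 0 < e) F"
    using ev1 ev2 lip
  proof eventually_elim
    case (elim t)
    have lip': "\<forall>s\<in>{t..t+h}. norm (E' s - E' t) \<le> L * (s - t)" using elim(3) h1 by auto
    have est: "norm (E (t+h) - E t - h *\<^sub>R E' t) \<le> L * h * h"
      by (rule taylor1_est[OF dE h0 lip']) (use L in simp)
    have "norm (h *\<^sub>R E' t) \<le> norm (E (t+h)) + norm (E t) + norm (E (t+h) - E t - h *\<^sub>R E' t)"
    proof -
      have eq: "h *\<^sub>R E' t = (E (t+h) - E t) - (E (t+h) - E t - h *\<^sub>R E' t)" by simp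
      have "norm (h *\<^sub>R E' t) \<le> norm (E (t+h) - E t) + norm (E (t+h) - E t - h *\<^sub>R E' t)"
        by (subst eq) (rule norm_triangle_ineq4)
      moreover have "norm (E (t+h) - E t) \<le> norm (E (t+h)) + norm (E t)" by (rule norm_triangle_ineq4)
      ultimately show ?thesis by linarith
    qed
    also have "\<dots> < d + d + L*h*h" using elim est by simp
    finally have "h * norm (E' t) < 2*d + L*h*h" using h0 by simp
    also have "\<dots> \<le> h * (e/2) + h*(e/4)" using hL h0 by (simp add: d_def field_simps)
    finally have "h * norm (E' t) < h * (3*e/4)" by (simp add: field_simps)
    then have "norm (E' t) < 3*e/4" using h0 by simp
    then show ?case using e by simp
  qed
qed




lemma du_deriv:
  assumes sol: "schrod_solution q u du" and cq: "isCont q t"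
  shows "(du has_vector_derivative (-(complex_of_real (q t) * u t))) (at t)"
proof -
  define g where "g s = -(complex_of_real (q s) * u s)" for s
  define a where "a = t - 1"
  define b where "b = t + 1"
  have du_d: "\<And>x. (u has_vector_derivative du x) (at x)"
    and int: "\<And>a b. a \<le> b \<Longrightarrow> (g has_integral (du b - du a)) {a..b}"
    using sol unfolding schrod_solution_def g_def by simp_all
  have ab: "a \<le> b" by (simp add: a_def b_def)
  have gi: "g integrable_on {a..b}" using int[OF ab] by blast
  have eq: "du s = du a + integral {a..s} g" if "s \<in> {a..b}" for s
  proof -
    have "a \<le> s" using that by simp
    from integral_unique[OF int[OF this]] show ?thesis by simp
  qed
  have cu: "isCont u t" using du_d[of t] by (rule has_vector_derivative_continuous)
  have cg: "isCont g t" unfolding g_def by (intro continuous_minus continuous_mult continuous_of_real cq cu)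
  have tab: "t \<in> {a..b} - {}" by (simp add: a_def b_def)
  have cgw: "continuous (at t within ({a..b} - {})) g"
    using cg by (rule continuous_at_imp_continuous_at_within)
  have D: "((\<lambda>x. integral {a..x} g) has_vector_derivative g t) (at t within ({a..b} - {}))"
    by (rule integral_has_vector_derivative_continuous_at[OF gi tab finite.emptyI cgw])
  have tin: "t \<in> interior {a..b}" by (simp add: a_def b_def)
  have D2: "((\<lambda>x. integral {a..x} g) has_vector_derivative g t) (at t)"
    using D unfolding Diff_empty at_within_interior[OF tin] .
  have D3: "((\<lambda>x. du a + integral {a..x} g) has_vector_derivative g t) (at t)"
    using has_vector_derivative_add[OF has_vector_derivative_const D2] by simp
  have "(du has_vector_derivative g t) (at t)"
  proof (rule has_vector_derivative_transform_within_open[OF D3])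
    show "open {a<..<b}" by simp
    show "t \<in> {a<..<b}" by (simp add: a_def b_def)
    fix y assume "y \<in> {a<..<b}"
    then have "y \<in> {a..b}" by simp
    then show "du a + integral {a..y} g = du y" by (rule eq[symmetric])
  qed
  then show ?thesis by (simp add: g_def)
qed

lemma ftc_bound:
  fixes f f' w :: "real \<Rightarrow> real"
  assumes S: "finite S" and ab: "a \<le> b"
    and d: "\<And>x. x \<in> {a<..<b} - S \<Longrightarrow> (f has_real_derivative f' x) (at x)"
    and c: "continuous_on {a..b} f"
    and le: "\<And>x. x \<in> {a..b} - S \<Longrightarrow> \<bar>f' x\<bar> \<le> w x"
    and w0: "\<And>x. 0 \<le> w x"
    and wi: "w integrable_on {a..b}"
  shows "f a - f b \<le> integral {a..b} w"
proof -
  define f2 where "f2 x = (if x \<in> S then 0 else f' x)" for x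
  have "(f2 has_integral (f b - f a)) {a..b}"
  proof (rule fundamental_theorem_of_calculus_interior_strong[OF S ab _ c])
    fix x assume "x \<in> {a<..<b} - S"
    then show "(f has_vector_derivative f2 x) (at x)"
      using d[of x] by (simp add: f2_def has_real_derivative_iff_has_vector_derivative)
  qed
  from has_integral_neg[OF this]
  have i1: "((\<lambda>x. - f2 x) has_integral (f a - f b)) {a..b}" by simp
  have i2: "(w has_integral integral {a..b} w) {a..b}" using wi by (rule integrable_integral)
  show ?thesis
  proof (rule has_integral_le[OF i1 i2])
    fix x assume x: "x \<in> {a..b}"
    show "- f2 x \<le> w x"
    proof (cases "x \<in> S")
      case True then show ?thesis using w0[of x] by (simp add: f2_def)
    next
      case False
      then have "\<bar>f' x\<bar> \<le> w x" using le x by blast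
      then show ?thesis using False by (simp add: f2_def)
    qed
  qed
qed




definition PP :: "(real \<Rightarrow> complex) \<Rightarrow> (real \<Rightarrow> real) \<Rightarrow> real \<Rightarrow> complex" where
  "PP u J t = u t * complex_of_real (1 / J t)"

definition RR :: "real \<Rightarrow> (real \<Rightarrow> complex) \<Rightarrow> (real \<Rightarrow> complex) \<Rightarrow> (real \<Rightarrow> real) \<Rightarrow> (real \<Rightarrow> real) \<Rightarrow> real \<Rightarrow> complex" where
  "RR k u du J J' t = (complex_of_real (J t) * du t - complex_of_real (J' t) * u t) * (- \<i> / complex_of_real k)"

lemma PP_deriv:
  assumes du: "(u has_vector_derivative du t) (at t)"
    and dJ: "(J has_real_derivative J' t) (at t)" and J0: "J t \<noteq> 0" and k0: "k \<noteq> 0"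
  shows "(PP u J has_vector_derivative (\<i> * complex_of_real (k / (J t)\<^sup>2) * RR k u du J J' t)) (at t)"
proof -
  have d1: "((\<lambda>x. 1 / J x) has_real_derivative (- J' t / (J t)\<^sup>2)) (at t)"
    using DERIV_inverse_fun[OF dJ J0] by (simp add: divide_inverse power2_eq_square)
  have "((\<lambda>x. u x * complex_of_real (1 / J x)) has_vector_derivative
          (u t * complex_of_real (- J' t / (J t)\<^sup>2) + du t * complex_of_real (1 / J t))) (at t)"
    by (rule has_vector_derivative_mult[OF du has_vector_derivative_of_real[OF d1]])
  moreover have "u t * complex_of_real (- J' t / (J t)\<^sup>2) + du t * complex_of_real (1 / J t)
      = \<i> * complex_of_real (k / (J t)\<^sup>2) * RR k u du J J' t"
    using J0 k0 by (simp add: RR_def field_simps power2_eq_square)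
  ultimately show ?thesis by (simp add: PP_def[abs_def])
qed

lemma RR_deriv:
  assumes u: "(u has_vector_derivative du t) (at t)"
    and du: "(du has_vector_derivative (-(complex_of_real (q t) * u t))) (at t)"
    and dJ: "(J has_real_derivative J' t) (at t)"
    and dJ': "(J' has_real_derivative J'' t) (at t)"
    and J0: "J t \<noteq> 0" and k0: "k \<noteq> 0"
  shows "(RR k u du J J' has_vector_derivative
           (\<i> * complex_of_real ((J t)\<^sup>2 / k * (q t + J'' t / J t)) * PP u J t)) (at t)"
proof -
  have "((\<lambda>x. (complex_of_real (J x) * du x - complex_of_real (J' x) * u x) * (- \<i> / complex_of_real k))
      has_vector_derivative
      ((complex_of_real (J t) * (-(complex_of_real (q t) * u t)) + complex_of_real (J' t) * du t
       - (complex_of_real (J' t) * du t + complex_of_real (J'' t) * u t)) * (- \<i> / complex_of_real k))) (at t)"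
    by (intro has_vector_derivative_mult_left has_vector_derivative_diff
          has_vector_derivative_mult has_vector_derivative_of_real u du dJ dJ')
  moreover have "(complex_of_real (J t) * (-(complex_of_real (q t) * u t)) + complex_of_real (J' t) * du t
       - (complex_of_real (J' t) * du t + complex_of_real (J'' t) * u t)) * (- \<i> / complex_of_real k)
     = \<i> * complex_of_real ((J t)\<^sup>2 / k * (q t + J'' t / J t)) * PP u J t"
    using J0 k0 by (simp add: PP_def field_simps power2_eq_square)
  ultimately show ?thesis by (simp add: RR_def[abs_def])
qed

lemma Wr_deriv:
  assumes u: "(u has_vector_derivative du t) (at t)"
    and du: "(du has_vector_derivative (-(complex_of_real (q t) * u t))) (at t)"
  shows "((\<lambda>x. Im (cnj (u x) * du x)) has_real_derivative 0) (at t)"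
proof -
  have "((\<lambda>x. Im (cnj (u x) * du x)) has_real_derivative
          Im (cnj (u t) * (-(complex_of_real (q t) * u t)) + cnj (du t) * du t)) (at t)"
    by (intro has_field_derivative_Im has_vector_derivative_mult has_vector_derivative_cnj u du)
  moreover have "Im (cnj (u t) * (-(complex_of_real (q t) * u t)) + cnj (du t) * du t) = 0"
    by (simp add: algebra_simps)
  ultimately show ?thesis by simp
qed

lemma normsq_deriv:
  fixes f :: "real \<Rightarrow> complex"
  assumes "(f has_vector_derivative f') (at t)"
  shows "((\<lambda>x. (cmod (f x))\<^sup>2) has_real_derivative 2 * Re (cnj (f t) * f')) (at t)"
proof -
  have "((\<lambda>x. (Re (f x))\<^sup>2 + (Im (f x))\<^sup>2) has_real_derivative
          (2 * Re (f t) * Re f' + 2 * Im (f t) * Im f')) (at t)"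
    using assms by (auto intro!: derivative_eq_intros)
  then show ?thesis by (simp add: cmod_power2 algebra_simps)
qed

lemma alg_PR: "(cmod (P + R))\<^sup>2 - (cmod (P - R))\<^sup>2 = 4 * Re (P * cnj R)"
  unfolding cmod_power2 by (simp add: algebra_simps power2_eq_square)

lemma alg_Wr:
  assumes J0: "J t \<noteq> 0" and k0: "k \<noteq> 0"
  shows "(cmod (PP u J t + RR k u du J J' t))\<^sup>2 - (cmod (PP u J t - RR k u du J J' t))\<^sup>2
       = 4 * Im (cnj (u t) * du t) / k"
proof -
  have c1: "cnj (- \<i> / complex_of_real k) = \<i> * complex_of_real (1/k)"
    by (simp add: complex_eq_iff)
  have e: "PP u J t * cnj (RR k u du J J' t) = complex_of_real (1/(J t * k)) * \<i> *
       (complex_of_real (J t) * (u t * cnj (du t)) - complex_of_real (J' t) * (u t * cnj (u t)))"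
    unfolding PP_def RR_def complex_cnj_mult c1 complex_cnj_diff complex_cnj_complex_of_real
    by (simp add: algebra_simps)
  have e2: "Re (PP u J t * cnj (RR k u du J J' t)) = - (1/(J t * k)) * (J t * Im (u t * cnj (du t)))"
    unfolding e by (simp add: algebra_simps)
  have "Re (PP u J t * cnj (RR k u du J J' t)) = Im (cnj (u t) * du t) / k"
    unfolding e2 using J0 k0 by (simp add: field_simps)
  then show ?thesis by (simp add: alg_PR)
qed

lemma alg_bound:
  fixes P R :: complex and \<kappa> \<Lambda> :: real
  shows "\<bar>2 * Re (cnj (P - R) * (\<i> * complex_of_real \<kappa> * R - \<i> * complex_of_real \<Lambda> * P))\<bar>
         \<le> \<bar>\<kappa> - \<Lambda>\<bar> * cmod (P + R) * cmod (P - R)"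
proof -
  have eq: "2 * Re (cnj (P - R) * (\<i> * complex_of_real \<kappa> * R - \<i> * complex_of_real \<Lambda> * P))
        = (\<kappa> - \<Lambda>) * Re (\<i> * cnj (P - R) * (P + R))"
    by (simp add: algebra_simps)
  have "\<bar>Re (\<i> * cnj (P - R) * (P + R))\<bar> \<le> cmod (\<i> * cnj (P - R) * (P + R))" by (rule abs_Re_le_cmod)
  also have "\<dots> = cmod (P + R) * cmod (P - R)" by (simp only: norm_mult complex_mod_cnj norm_ii) simp
  finally show ?thesis unfolding eq abs_mult
    by (simp add: mult.assoc mult_left_mono)
qed




lemma int_lip:
  fixes g f :: "real \<Rightarrow> complex"
  assumes "(g has_integral (f s - f t)) {t..s}" "t \<le> s" "\<And>x. x \<in> {t..s} \<Longrightarrow> norm (g x) \<le> B" "0 \<le> B"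
  shows "norm (f s - f t) \<le> B * (s - t)"
proof -
  have "norm (f s - f t) \<le> B * measure lborel (cbox t s)"
    by (rule has_integral_bound[OF assms(4)]) (use assms(1,3) in auto)
  then show ?thesis using assms(2) by simp
qed

lemma shift_top: "filterlim (\<lambda>t. t + h) at_top (at_top :: real filter)"
  using filterlim_tendsto_add_at_top[OF tendsto_const filterlim_ident, of h] by (simp add: add.commute)

lemma shift_bot: "filterlim (\<lambda>t. t + h) at_bot (at_bot :: real filter)"
proof -
  have "filterlim (\<lambda>t. - t + - h) at_top (at_bot :: real filter)"
    using filterlim_tendsto_add_at_top[OF tendsto_const filterlim_uminus_at_top_at_bot, of "-h"]
    by (simp add: add.commute)
  from iffD1[OF filterlim_uminus_at_top this] show ?thesis by (simp add: add.commute)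
qed

lemma near_top: "eventually P (at_top :: real filter) \<Longrightarrow> eventually (\<lambda>t. \<forall>s\<in>{t..t+1}. P s) at_top"
  unfolding eventually_at_top_linorder by (metis atLeastAtMost_iff order_trans)

lemma near_bot: "eventually P (at_bot :: real filter) \<Longrightarrow> eventually (\<lambda>t. \<forall>s\<in>{t..t+1}. P s) at_bot"
  unfolding eventually_at_bot_linorder
proof -
  assume "\<exists>N. \<forall>n\<le>N. P n"
  then obtain N where N: "\<forall>n\<le>N. P n" by blast
  show "\<exists>N. \<forall>n\<le>N. \<forall>s\<in>{n..n + 1}. P s"
    by (rule exI[of _ "N - 1"]) (use N in auto)
qed

lemma asym_deriv:
  fixes F :: "real filter" and f0 f1 f2 :: "real \<Rightarrow> complex"
  assumes sol: "schrod_solution q u du"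
   and shift: "\<And>h. filterlim (\<lambda>t. t + h) F F"
   and near: "\<And>P. eventually P F \<Longrightarrow> eventually (\<lambda>t. \<forall>s\<in>{t..t+1}. P s) F"
   and qlim: "(q \<longlongrightarrow> c) F"
   and ulim: "((\<lambda>x. u x - f0 x) \<longlongrightarrow> 0) F"
   and d0: "\<And>x. (f0 has_vector_derivative f1 x) (at x)"
   and d1: "\<And>x. (f1 has_vector_derivative f2 x) (at x)"
   and B0: "\<And>x. norm (f0 x) \<le> B0" and B2: "\<And>x. norm (f2 x) \<le> B2"
  shows "((\<lambda>x. du x - f1 x) \<longlongrightarrow> 0) F"
proof -
  define E where "E x = u x - f0 x" for x
  define E' where "E' x = du x - f1 x" for x
  have du_d: "\<And>x. (u has_vector_derivative du x) (at x)"
    and int: "\<And>a b. a \<le> b \<Longrightarrow> ((\<lambda>t. - (complex_of_real (q t) * u t)) has_integral (du b - du a)) {a..b}"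
    using sol unfolding schrod_solution_def by simp_all
  have dE: "\<And>x. (E has_vector_derivative E' x) (at x)"
    unfolding E_def E'_def by (intro has_vector_derivative_diff du_d d0)
  have lim: "((\<lambda>t. E (t+h)) \<longlongrightarrow> 0) F" for h
    using filterlim_compose[OF ulim shift[of h]] by (simp add: E_def)
  have B00: "0 \<le> B0" using B0[of 0] norm_ge_zero order_trans by blast
  have B20: "0 \<le> B2" using B2[of 0] norm_ge_zero order_trans by blast
  define Mq where "Mq = (\<bar>c\<bar> + 1) * (1 + B0)"
  have Mq0: "0 \<le> Mq" using B00 by (simp add: Mq_def)
  have ev1: "eventually (\<lambda>x. dist (q x) c < 1) F" using qlim by (rule tendstoD) simp
  have ev2: "eventually (\<lambda>x. dist (E x) 0 < 1) F" using ulim unfolding E_def by (rule tendstoD) simp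
  have evb: "eventually (\<lambda>x. norm (- (complex_of_real (q x) * u x)) \<le> Mq) F"
    using ev1 ev2
  proof eventually_elim
    case (elim x)
    have q1: "\<bar>q x\<bar> \<le> \<bar>c\<bar> + 1" using elim(1) by (simp add: dist_real_def)
    have "norm (u x) \<le> norm (E x) + norm (f0 x)" unfolding E_def
      by (metis diff_add_cancel norm_triangle_ineq)
    also have "\<dots> \<le> 1 + B0" using elim(2) B0[of x] by simp
    finally have u1: "norm (u x) \<le> 1 + B0" .
    have "norm (- (complex_of_real (q x) * u x)) = \<bar>q x\<bar> * norm (u x)" by (simp add: norm_mult)
    also have "\<dots> \<le> (\<bar>c\<bar> + 1) * (1 + B0)" by (intro mult_mono q1 u1) auto
    finally show ?case by (simp add: Mq_def)
  qed
  have lip: "eventually (\<lambda>t. \<forall>s\<in>{t..t+1}. norm (E' s - E' t) \<le> (Mq + B2 + 1) * (s - t)) F"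
    using near[OF evb]
  proof eventually_elim
    case (elim t)
    show ?case
    proof
      fix s assume s: "s \<in> {t..t+1}"
      have ts: "t \<le> s" using s by simp
      have n1: "norm (du s - du t) \<le> Mq * (s - t)"
        by (rule int_lip[OF int[OF ts] ts _ Mq0]) (use elim s in auto)
      have f1i: "(f2 has_integral (f1 s - f1 t)) {t..s}"
        by (rule fundamental_theorem_of_calculus[OF ts]) (auto intro: has_vector_derivative_at_within d1)
      have n2: "norm (f1 s - f1 t) \<le> B2 * (s - t)"
        by (rule int_lip[OF f1i ts _ B20]) (use B2 in auto)
      have "norm (E' s - E' t) = norm ((du s - du t) - (f1 s - f1 t))" by (simp add: E'_def algebra_simps)
      also have "\<dots> \<le> norm (du s - du t) + norm (f1 s - f1 t)" by (rule norm_triangle_ineq4)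
      also have "\<dots> \<le> Mq * (s - t) + B2 * (s - t)" using n1 n2 by simp
      also have "\<dots> \<le> (Mq + B2 + 1) * (s - t)" using ts by (simp add: algebra_simps)
      finally show "norm (E' s - E' t) \<le> (Mq + B2 + 1) * (s - t)" .
    qed
  qed
  have "(E' \<longlongrightarrow> 0) F"
    by (rule deriv_tendsto_zero[OF dE lim _ lip]) (use Mq0 B20 in simp)
  then show ?thesis by (simp add: E'_def[abs_def])
qed




lemma const_deriv0:
  fixes f :: "real \<Rightarrow> real"
  assumes c: "continuous_on UNIV f" and S: "\<And>a b. finite (S \<inter> {a..b})"
    and d: "\<And>x. x \<notin> S \<Longrightarrow> (f has_real_derivative 0) (at x)"
  shows "f a = f b"
proof -
  have le: "f x - f y \<le> 0" if "x \<le> y" "continuous_on UNIV f" "\<And>x. x \<notin> S \<Longrightarrow> (f has_real_derivative 0) (at x)"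
    for f :: "real \<Rightarrow> real" and x y
  proof -
    have "f x - f y \<le> integral {x..y} (\<lambda>_. 0::real)"
      by (rule ftc_bound[of "S \<inter> {x..y}" x y f "\<lambda>_. 0"])
         (use S that in \<open>auto intro: continuous_on_subset\<close>)
    then show ?thesis by simp
  qed
  have dm: "((\<lambda>x. - f x) has_real_derivative 0) (at x)" if "x \<notin> S" for x
    using DERIV_minus[OF d[OF that]] by simp
  have cm: "continuous_on UNIV (\<lambda>x. - f x)" using c by (intro continuous_intros)
  show ?thesis
  proof (cases "a \<le> b")
    case True
    show ?thesis using le[OF True c d] le[OF True cm dm] by simp
  next
    case False
    then have "b \<le> a" by simp
    show ?thesis using le[OF \<open>b \<le> a\<close> c d] le[OF \<open>b \<le> a\<close> cm dm] by simp
  qed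
qed

lemma bounded_zero:
  fixes f g :: "'a \<Rightarrow> complex"
  assumes "(f \<longlongrightarrow> 0) F" "\<And>x. norm (g x) \<le> B"
  shows "((\<lambda>x. f x * g x) \<longlongrightarrow> 0) F"
proof (rule Lim_null_comparison)
  show "eventually (\<lambda>x. norm (f x * g x) \<le> norm (f x) * B) F"
    by (intro always_eventually allI) (simp add: norm_mult mult_left_mono assms(2))
  have "((\<lambda>x. norm (f x)) \<longlongrightarrow> norm (0::complex)) F" by (intro tendsto_norm assms(1))
  then have "((\<lambda>x. norm (f x)) \<longlongrightarrow> 0) F" by simp
  then show "((\<lambda>x. norm (f x) * B) \<longlongrightarrow> 0) F" by (rule tendsto_mult_left_zero)
qed

lemma ex_deriv:
  "((\<lambda>t. exp (c * complex_of_real (k * t))) has_vector_derivative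
     (c * complex_of_real k * exp (c * complex_of_real (k * t)))) (at t)"
proof -
  have "((\<lambda>z. exp (c * complex_of_real k * z)) has_field_derivative
          (c * complex_of_real k * exp (c * complex_of_real k * complex_of_real t))) (at (complex_of_real t))"
    by (auto intro!: derivative_eq_intros)
  from has_vector_derivative_real_field[OF this]
  show ?thesis by (simp add: mult.assoc)
qed

lemma wr_top: "Im (cnj (\<tau> * e) * (\<i> * complex_of_real k * \<tau> * e)) = k * (cmod \<tau>)\<^sup>2 * (cmod e)\<^sup>2"
  unfolding cmod_power2 by (simp add: algebra_simps power2_eq_square)

lemma wr_bot: "Im (cnj (e + r * cnj e) * (\<i> * complex_of_real k * (e - r * cnj e))) = k * (cmod e)\<^sup>2 * (1 - (cmod r)\<^sup>2)"
  unfolding cmod_power2 by (simp add: algebra_simps power2_eq_square)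

lemma h_deriv:
  fixes N :: "real \<Rightarrow> real"
  assumes dN: "(N has_real_derivative N') (at t)" and pos: "0 \<le> N t" "0 \<le> C" "0 < \<epsilon>"
  shows "((\<lambda>x. ln (sqrt (N x + \<epsilon>) + sqrt (N x + C + 2*\<epsilon>))) has_real_derivative
          N' / (2 * sqrt (N t + \<epsilon>) * sqrt (N t + C + 2*\<epsilon>))) (at t)"
proof -
  have Y: "0 < sqrt (N t + \<epsilon>)" and Z: "0 < sqrt (N t + C + 2*\<epsilon>)" using pos by auto
  have d1: "((\<lambda>x. N x + \<epsilon>) has_real_derivative N') (at t)"
    using DERIV_add[OF dN DERIV_const[of \<epsilon>]] by simp
  have d2: "((\<lambda>x. N x + C + 2*\<epsilon>) has_real_derivative N') (at t)"
    using DERIV_add[OF dN DERIV_const[of "C + 2*\<epsilon>"]] by (simp add: add.assoc)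
  have s1: "((\<lambda>x. sqrt (N x + \<epsilon>)) has_real_derivative (inverse (sqrt (N t + \<epsilon>)) / 2 * N')) (at t)"
    using DERIV_chain2[OF DERIV_real_sqrt d1] pos by simp
  have s2: "((\<lambda>x. sqrt (N x + C + 2*\<epsilon>)) has_real_derivative (inverse (sqrt (N t + C + 2*\<epsilon>)) / 2 * N')) (at t)"
    using DERIV_chain2[OF DERIV_real_sqrt d2] pos by simp
  have "((\<lambda>x. ln (sqrt (N x + \<epsilon>) + sqrt (N x + C + 2*\<epsilon>))) has_real_derivative
     1 / (sqrt (N t + \<epsilon>) + sqrt (N t + C + 2*\<epsilon>)) * (inverse (sqrt (N t + \<epsilon>)) / 2 * N' + inverse (sqrt (N t + C + 2*\<epsilon>)) / 2 * N')) (at t)"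
    using DERIV_chain2[OF DERIV_ln_divide DERIV_add[OF s1 s2]] add_pos_pos[OF Y Z] by simp
  moreover have "1 / (sqrt (N t + \<epsilon>) + sqrt (N t + C + 2*\<epsilon>)) * (inverse (sqrt (N t + \<epsilon>)) / 2 * N' + inverse (sqrt (N t + C + 2*\<epsilon>)) / 2 * N')
     = N' / (2 * sqrt (N t + \<epsilon>) * sqrt (N t + C + 2*\<epsilon>))"
  proof -
    have gen: "1 / (y + z) * (inverse y / 2 * N' + inverse z / 2 * N') = N' / (2 * y * z)"
      if a: "y > 0" "z > 0" for y z :: real
    proof -
      have "y + z > 0" using a by simp
      then have ne: "y + z \<noteq> 0" by simp
      have "inverse y / 2 * N' + inverse z / 2 * N' = (y + z) * (N' / (2 * y * z))" using a by (simp add: field_simps)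
      then show ?thesis using ne by simp
    qed
    show ?thesis by (rule gen[OF Y Z])
  qed
  ultimately show ?thesis by simp
qed

lemma h_bound:
  fixes N' G a b N C \<epsilon> :: real
  assumes "\<bar>N'\<bar> \<le> G * a * b" "0 \<le> G" "0 \<le> a" "0 \<le> b" "b\<^sup>2 = N" "a\<^sup>2 = N + C" "0 \<le> C" "0 < \<epsilon>"
  shows "\<bar>N' / (2 * sqrt (N + \<epsilon>) * sqrt (N + C + 2*\<epsilon>))\<bar> \<le> G / 2"
proof -
  have N0: "0 \<le> N" using assms(5) by (metis zero_le_power2)
  have Y: "0 < sqrt (N + \<epsilon>)" and Z: "0 < sqrt (N + C + 2*\<epsilon>)" using N0 assms by auto
  have "b = sqrt N" using assms(4,5) by (metis real_sqrt_abs abs_of_nonneg)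
  then have bY: "b \<le> sqrt (N + \<epsilon>)" using assms by simp
  have "a = sqrt (N + C)" using assms(3,6) by (metis real_sqrt_abs abs_of_nonneg)
  then have aZ: "a \<le> sqrt (N + C + 2*\<epsilon>)" using assms by simp
  have "G * a * b \<le> G * sqrt (N + C + 2*\<epsilon>) * sqrt (N + \<epsilon>)"
    using aZ bY assms by (intro mult_mono) auto
  then have "\<bar>N'\<bar> \<le> G * (sqrt (N + \<epsilon>) * sqrt (N + C + 2*\<epsilon>))" using assms(1) by (simp add: ac_simps)
  then show ?thesis using Y Z by (simp add: abs_divide abs_mult divide_le_eq field_simps)
qed




lemma wr_lim:
  fixes u du f0 f1 :: "real \<Rightarrow> complex"
  assumes "((\<lambda>x. u x - f0 x) \<longlongrightarrow> 0) F" "((\<lambda>x. du x - f1 x) \<longlongrightarrow> 0) F"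
    and "\<And>x. norm (f0 x) \<le> B0" "\<And>x. norm (f1 x) \<le> B1"
  shows "((\<lambda>x. Im (cnj (u x) * du x) - Im (cnj (f0 x) * f1 x)) \<longlongrightarrow> 0) F"
proof -
  have c1: "((\<lambda>x. cnj (u x - f0 x)) \<longlongrightarrow> 0) F" using tendsto_cnj[OF assms(1)] by simp
  have t1: "((\<lambda>x. cnj (u x - f0 x) * (du x - f1 x)) \<longlongrightarrow> 0) F"
    using tendsto_mult[OF c1 assms(2)] by simp
  have t2: "((\<lambda>x. cnj (u x - f0 x) * f1 x) \<longlongrightarrow> 0) F" by (rule bounded_zero[OF c1 assms(4)])
  have t3: "((\<lambda>x. (du x - f1 x) * cnj (f0 x)) \<longlongrightarrow> 0) F"
    by (rule bounded_zero[OF assms(2)]) (use assms(3) in simp)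
  have "((\<lambda>x. cnj (u x - f0 x) * (du x - f1 x) + cnj (u x - f0 x) * f1 x + (du x - f1 x) * cnj (f0 x)) \<longlongrightarrow> 0) F"
    using tendsto_add[OF tendsto_add[OF t1 t2] t3] by simp
  then have "((\<lambda>x. Im (cnj (u x - f0 x) * (du x - f1 x) + cnj (u x - f0 x) * f1 x + (du x - f1 x) * cnj (f0 x))) \<longlongrightarrow> 0) F"
    using tendsto_Im by fastforce
  moreover have "Im (cnj (u x - f0 x) * (du x - f1 x) + cnj (u x - f0 x) * f1 x + (du x - f1 x) * cnj (f0 x))
      = Im (cnj (u x) * du x) - Im (cnj (f0 x) * f1 x)" for x
    by (simp add: algebra_simps)
  ultimately show ?thesis by simp
qed

lemma PR_lim:
  fixes u du a0 b0 :: "'a \<Rightarrow> complex" and J J' :: "'a \<Rightarrow> real"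
  assumes ua: "((\<lambda>n. u n - a0 n) \<longlongrightarrow> 0) F" and ub: "((\<lambda>n. du n - b0 n) \<longlongrightarrow> 0) F"
    and J1: "(J \<longlongrightarrow> 1) F" and J'0: "(J' \<longlongrightarrow> 0) F"
    and Ba: "\<And>n. norm (a0 n) \<le> Ba" and Bb: "\<And>n. norm (b0 n) \<le> Bb"
    and J0: "\<And>n. J n \<noteq> 0" and k0: "k \<noteq> 0"
  shows "((\<lambda>n. (u n * complex_of_real (1 / J n) - (complex_of_real (J n) * du n - complex_of_real (J' n) * u n) * (- \<i> / complex_of_real k))
              - (a0 n + \<i> / complex_of_real k * b0 n)) \<longlongrightarrow> 0) F"
proof -
  have cJ1: "((\<lambda>n. complex_of_real (J n)) \<longlongrightarrow> 1) F" using tendsto_of_real[OF J1] by simp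
  have cJ'0: "((\<lambda>n. complex_of_real (J' n)) \<longlongrightarrow> 0) F" using tendsto_of_real[OF J'0] by simp
  have iJ': "((\<lambda>n. complex_of_real (1 / J n)) \<longlongrightarrow> complex_of_real (1 / 1)) F"
    by (intro tendsto_of_real tendsto_divide tendsto_const J1) simp
  then have iJ: "((\<lambda>n. complex_of_real (1 / J n)) \<longlongrightarrow> 1) F" by (simp only: div_by_1 of_real_1)
  have iJ0: "((\<lambda>n. complex_of_real (1 / J n) - 1) \<longlongrightarrow> 0) F"
    using tendsto_diff[OF iJ tendsto_const[of 1]] by simp
  have cJm: "((\<lambda>n. complex_of_real (J n) - 1) \<longlongrightarrow> 0) F"
    using tendsto_diff[OF cJ1 tendsto_const[of 1]] by simp
  have T1: "((\<lambda>n. (u n - a0 n) * complex_of_real (1 / J n)) \<longlongrightarrow> 0) F"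
    using tendsto_mult[OF ua iJ] by simp
  have T2: "((\<lambda>n. (complex_of_real (1 / J n) - 1) * a0 n) \<longlongrightarrow> 0) F" by (rule bounded_zero[OF iJ0 Ba])
  have T3: "((\<lambda>n. complex_of_real (J n) * (du n - b0 n)) \<longlongrightarrow> 0) F"
    using tendsto_mult[OF cJ1 ub] by simp
  have T4: "((\<lambda>n. (complex_of_real (J n) - 1) * b0 n) \<longlongrightarrow> 0) F" by (rule bounded_zero[OF cJm Bb])
  have T5: "((\<lambda>n. complex_of_real (J' n) * (u n - a0 n)) \<longlongrightarrow> 0) F"
    using tendsto_mult[OF cJ'0 ua] by simp
  have T6: "((\<lambda>n. complex_of_real (J' n) * a0 n) \<longlongrightarrow> 0) F" by (rule bounded_zero[OF cJ'0 Ba])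
  have "((\<lambda>n. (u n - a0 n) * complex_of_real (1 / J n) + (complex_of_real (1 / J n) - 1) * a0 n
      + \<i> / complex_of_real k * (complex_of_real (J n) * (du n - b0 n) + (complex_of_real (J n) - 1) * b0 n
        - complex_of_real (J' n) * (u n - a0 n) - complex_of_real (J' n) * a0 n)) \<longlongrightarrow> 0 + 0 + \<i> / complex_of_real k * (0 + 0 - 0 - 0)) F"
    by (intro tendsto_add tendsto_mult tendsto_diff tendsto_const T1 T2 T3 T4 T5 T6)
  moreover have "(u n - a0 n) * complex_of_real (1 / J n) + (complex_of_real (1 / J n) - 1) * a0 n
      + \<i> / complex_of_real k * (complex_of_real (J n) * (du n - b0 n) + (complex_of_real (J n) - 1) * b0 n
        - complex_of_real (J' n) * (u n - a0 n) - complex_of_real (J' n) * a0 n)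
     = (u n * complex_of_real (1 / J n) - (complex_of_real (J n) * du n - complex_of_real (J' n) * u n) * (- \<i> / complex_of_real k))
              - (a0 n + \<i> / complex_of_real k * b0 n)" for n
    by (simp add: algebra_simps) (simp add: add_divide_distrib[symmetric])
  ultimately show ?thesis by simp
qed

lemma final_real:
  fixes s \<rho> A :: real
  assumes s0: "0 \<le> s" and r0: "0 \<le> \<rho>" and sr: "s\<^sup>2 + \<rho>\<^sup>2 = 1" and le: "1 + \<rho> \<le> exp A * s"
  shows "(sech A)\<^sup>2 \<le> s\<^sup>2"
proof -
  have sp: "0 < s"
  proof (rule ccontr)
    assume "\<not> 0 < s" then have "s = 0" using s0 by simp
    then show False using le r0 by simp
  qed
  have s1: "s \<le> 1" using sr by (metis abs_of_nonneg abs_square_le_1 le_add_same_cancel1 s0 zero_le_power2)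
  define w where "w = (1 + \<rho>) / s"
  have w1: "1 \<le> w" using s1 sp r0 by (simp add: w_def field_simps)
  have wE: "w \<le> exp A" using le sp by (simp add: w_def divide_le_eq mult.commute)
  have ww: "w + 1 / w = 2 / s"
  proof -
    have "w + 1 / w = ((1 + \<rho>)\<^sup>2 + s\<^sup>2) / (s * (1 + \<rho>))" using sp r0 by (simp add: w_def field_simps power2_eq_square)
    also have "(1 + \<rho>)\<^sup>2 + s\<^sup>2 = 2 * (1 + \<rho>)" using sr by (simp add: power2_eq_square algebra_simps)
    also have "(2 * (1 + \<rho>)) / (s * (1 + \<rho>)) = 2 / s"
      by (rule nonzero_mult_divide_mult_cancel_right) (use r0 in simp)
    finally show ?thesis .
  qed
  define X where "X = exp A"
  have X0: "0 < X" by (simp add: X_def)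
  have mono: "w + 1 / w \<le> X + 1 / X"
  proof -
    have "X + 1 / X - (w + 1 / w) = (X - w) * (1 - 1 / (X * w))" using X0 w1 by (simp add: field_simps)
    moreover have "0 \<le> X - w" using wE by (simp add: X_def)
    moreover have "1 / (X * w) \<le> 1" using X0 w1 wE by (simp add: X_def divide_le_eq) (metis mult_mono' order_trans less_eq_real_def zero_le_one mult_1)
    ultimately show ?thesis by (metis diff_ge_0_iff_ge mult_nonneg_nonneg)
  qed
  have ch: "cosh A = (X + 1 / X) / 2" by (simp add: cosh_def X_def exp_minus field_simps)
  have "1 / s \<le> cosh A" using mono ww ch by simp
  then have "sech A \<le> s" using sp by (simp add: sech_def divide_le_eq field_simps)
  moreover have "0 \<le> sech A" by (simp add: sech_def)
  ultimately show ?thesis by (simp add: power_mono)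
qed


theorem mainTheorem9:
  fixes q :: "real \<Rightarrow> real" and kinf :: real
    and u du :: "real \<Rightarrow> complex" and r \<tau> :: complex
    and J J' J'' :: "real \<Rightarrow> real"
  assumes pc: "piecewise_continuous q"
    and kpos: "kinf > 0"
    and lim_top: "(q \<longlongrightarrow> kinf\<^sup>2) at_top"
    and lim_bot: "(q \<longlongrightarrow> kinf\<^sup>2) at_bot"
    and int_tails: "\<exists>c. (\<lambda>x. q x - kinf\<^sup>2) absolutely_integrable_on {c..} \<and>
                         (\<lambda>x. q x - kinf\<^sup>2) absolutely_integrable_on {..c}"
    and sol: "schrod_solution q u du"
    and asym_bot: "((\<lambda>x. u x - (exp (\<i> * complex_of_real (kinf * x))
                        + r * exp (- \<i> * complex_of_real (kinf * x)))) \<longlongrightarrow> 0) at_bot"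
    and asym_top: "((\<lambda>x. u x - \<tau> * exp (\<i> * complex_of_real (kinf * x))) \<longlongrightarrow> 0) at_top"
    and J_pos: "\<And>x. J x > 0"
    and J_d1: "\<And>x. (J has_real_derivative J' x) (at x)"
    and J_d2: "\<And>x. (J' has_real_derivative J'' x) (at x)"
    and J_C2: "continuous_on UNIV J''"
    and J_top: "(J \<longlongrightarrow> 1) at_top"
    and J_bot: "(J \<longlongrightarrow> 1) at_bot"
  shows "(\<integral>\<^sup>+ x. ennreal \<bar>(J x)\<^sup>2 / kinf * (q x + J'' x / J x) - kinf / (J x)\<^sup>2\<bar> \<partial>lborel) < \<infinity>
         \<longrightarrow> (cmod \<tau>)\<^sup>2 \<ge>
             (sech ((1/2) * enn2real (\<integral>\<^sup>+ x. ennreal \<bar>(J x)\<^sup>2 / kinf * (q x + J'' x / J x) - kinf / (J x)\<^sup>2\<bar> \<partial>lborel)))\<^sup>2"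
proof
  define Fi where "Fi x = \<bar>(J x)\<^sup>2 / kinf * (q x + J'' x / J x) - kinf / (J x)\<^sup>2\<bar>" for x
  define I where "I = enn2real (\<integral>\<^sup>+ x. ennreal (Fi x) \<partial>lborel)"
  assume fin0: "(\<integral>\<^sup>+ x. ennreal \<bar>(J x)\<^sup>2 / kinf * (q x + J'' x / J x) - kinf / (J x)\<^sup>2\<bar> \<partial>lborel) < \<infinity>"
  then have fin: "(\<integral>\<^sup>+ x. ennreal (Fi x) \<partial>lborel) < \<infinity>" by (simp add: Fi_def)
  obtain S where Sfin: "\<And>a b. finite (S \<inter> {a..b})" and Scont: "\<And>x. x \<notin> S \<Longrightarrow> isCont q x"
    using pc unfolding piecewise_continuous_def by blast
  have du_d: "\<And>x. (u has_vector_derivative du x) (at x)" and cdu: "continuous_on UNIV du"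
    using sol unfolding schrod_solution_def by simp_all
  have ddu: "\<And>x. x \<notin> S \<Longrightarrow> (du has_vector_derivative (-(complex_of_real (q x) * u x))) (at x)"
    using du_deriv[OF sol Scont] by blast
  have J0: "\<And>x. J x \<noteq> 0" using J_pos by (metis less_irrefl)
  have k0: "kinf \<noteq> 0" using kpos by simp
  have cu: "continuous_on UNIV u"
    by (rule continuous_on_vector_derivative) (use du_d has_vector_derivative_at_within in blast)
  have cJ: "continuous_on UNIV J"
    by (rule continuous_at_imp_continuous_on) (use J_d1 DERIV_isCont in blast)
  have cJ': "continuous_on UNIV J'"
    by (rule continuous_at_imp_continuous_on) (use J_d2 DERIV_isCont in blast)

  define Wr where "Wr x = Im (cnj (u x) * du x)" for x
  have cWr: "continuous_on UNIV Wr" unfolding Wr_def by (intro continuous_intros cu cdu)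
  have Wr_const: "Wr x = Wr 0" for x
  proof (rule const_deriv0[OF cWr Sfin])
    fix t assume "t \<notin> S"
    from Wr_deriv[where q=q, OF du_d[of t] ddu[OF this]] show "(Wr has_real_derivative 0) (at t)" by (simp add: Wr_def[abs_def])
  qed

  define ex where "ex x = exp (\<i> * complex_of_real (kinf * x))" for x
  define exm where "exm x = exp (- \<i> * complex_of_real (kinf * x))" for x
  have nex: "norm (ex x) = 1" for x unfolding ex_def using norm_exp_i_times[of "kinf * x"] by simp
  have exm_cnj: "exm x = cnj (ex x)" for x unfolding ex_def exm_def by (simp add: exp_cnj)
  have nexm: "norm (exm x) = 1" for x using nex by (simp add: exm_cnj)
  have dex: "(ex has_vector_derivative (\<i> * complex_of_real kinf * ex x)) (at x)" for x
    unfolding ex_def[abs_def] by (rule ex_deriv)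
  have dexm: "(exm has_vector_derivative (- \<i> * complex_of_real kinf * exm x)) (at x)" for x
    unfolding exm_def[abs_def] by (rule ex_deriv)

  define f0t where "f0t x = \<tau> * ex x" for x
  define f1t where "f1t x = \<tau> * (\<i> * complex_of_real kinf * ex x)" for x
  define f2t where "f2t x = \<tau> * (\<i> * complex_of_real kinf * (\<i> * complex_of_real kinf * ex x))" for x
  have nf0t: "norm (f0t x) \<le> cmod \<tau>" for x by (simp add: f0t_def norm_mult nex)
  have nf1t: "norm (f1t x) \<le> cmod \<tau> * kinf" for x using kpos by (simp add: f1t_def norm_mult nex)
  have nf2t: "norm (f2t x) \<le> cmod \<tau> * kinf * kinf" for x using kpos by (simp add: f2t_def norm_mult nex)
  have utop: "((\<lambda>x. u x - f0t x) \<longlongrightarrow> 0) at_top" using asym_top by (simp add: f0t_def ex_def)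
  have dutop: "((\<lambda>x. du x - f1t x) \<longlongrightarrow> 0) at_top"
  proof (rule asym_deriv[OF sol shift_top near_top lim_top utop _ _ nf0t nf2t])
    show "(f0t has_vector_derivative f1t x) (at x)" for x
      unfolding f0t_def[abs_def] f1t_def by (intro has_vector_derivative_mult_right dex)
    show "(f1t has_vector_derivative f2t x) (at x)" for x
      unfolding f1t_def[abs_def] f2t_def by (intro has_vector_derivative_mult_right dex)
  qed
  define f0b where "f0b x = ex x + r * exm x" for x
  define f1b where "f1b x = \<i> * complex_of_real kinf * ex x + r * (- \<i> * complex_of_real kinf * exm x)" for x
  define f2b where "f2b x = \<i> * complex_of_real kinf * (\<i> * complex_of_real kinf * ex x)
      + r * (- \<i> * complex_of_real kinf * (- \<i> * complex_of_real kinf * exm x))" for x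
  have nf0b: "norm (f0b x) \<le> 1 + cmod r" for x
    using norm_triangle_ineq[of "ex x" "r * exm x"] by (simp add: f0b_def norm_mult nex nexm)
  have nf1b: "norm (f1b x) \<le> kinf + cmod r * kinf" for x
    using norm_triangle_ineq[of "\<i> * complex_of_real kinf * ex x" "r * (- \<i> * complex_of_real kinf * exm x)"] kpos
    by (simp add: f1b_def norm_mult nex nexm)
  have nf2b: "norm (f2b x) \<le> kinf * kinf + cmod r * (kinf * kinf)" for x
    using norm_triangle_ineq[of "\<i> * complex_of_real kinf * (\<i> * complex_of_real kinf * ex x)"
        "r * (- \<i> * complex_of_real kinf * (- \<i> * complex_of_real kinf * exm x))"] kpos
    by (simp add: f2b_def norm_mult nex nexm)
  have ubot: "((\<lambda>x. u x - f0b x) \<longlongrightarrow> 0) at_bot" using asym_bot by (simp add: f0b_def ex_def exm_def)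
  have dubot: "((\<lambda>x. du x - f1b x) \<longlongrightarrow> 0) at_bot"
  proof (rule asym_deriv[OF sol shift_bot near_bot lim_bot ubot _ _ nf0b nf2b])
    show "(f0b has_vector_derivative f1b x) (at x)" for x
      unfolding f0b_def[abs_def] f1b_def by (intro has_vector_derivative_add has_vector_derivative_mult_right dex dexm)
    show "(f1b has_vector_derivative f2b x) (at x)" for x
      unfolding f1b_def[abs_def] f2b_def
      by (intro has_vector_derivative_add has_vector_derivative_mult_right dex dexm)
  qed

  have Wtop: "Wr 0 = kinf * (cmod \<tau>)\<^sup>2"
  proof -
    have "((\<lambda>x. Wr x - Im (cnj (f0t x) * f1t x)) \<longlongrightarrow> 0) at_top"
      unfolding Wr_def by (rule wr_lim[OF utop dutop nf0t nf1t])
    moreover have "Im (cnj (f0t x) * f1t x) = kinf * (cmod \<tau>)\<^sup>2" for x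
      using wr_top[of \<tau> "ex x" kinf] nex[of x] by (simp add: f0t_def f1t_def ac_simps)
    ultimately have "((\<lambda>x. Wr x - kinf * (cmod \<tau>)\<^sup>2) \<longlongrightarrow> 0) at_top" by simp
    moreover have "(\<lambda>x. Wr x - kinf * (cmod \<tau>)\<^sup>2) = (\<lambda>x. Wr 0 - kinf * (cmod \<tau>)\<^sup>2)" by (intro ext) (metis Wr_const)
    ultimately have "((\<lambda>x::real. Wr 0 - kinf * (cmod \<tau>)\<^sup>2) \<longlongrightarrow> 0) at_top" by simp
    then show ?thesis using tendsto_const_iff[of at_top] by (metis eq_iff_diff_eq_0 trivial_limit_at_top_linorder)
  qed
  have Wbot: "Wr 0 = kinf * (1 - (cmod r)\<^sup>2)"
  proof -
    have "((\<lambda>x. Wr x - Im (cnj (f0b x) * f1b x)) \<longlongrightarrow> 0) at_bot"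
      unfolding Wr_def by (rule wr_lim[OF ubot dubot nf0b nf1b])
    moreover have "Im (cnj (f0b x) * f1b x) = kinf * (1 - (cmod r)\<^sup>2)" for x
    proof -
      have "f1b x = \<i> * complex_of_real kinf * (ex x - r * cnj (ex x))" by (simp add: f1b_def exm_cnj algebra_simps)
      then show ?thesis using wr_bot[of "ex x" r kinf] nex[of x] by (simp add: f0b_def exm_cnj)
    qed
    ultimately have "((\<lambda>x. Wr x - kinf * (1 - (cmod r)\<^sup>2)) \<longlongrightarrow> 0) at_bot" by simp
    moreover have "(\<lambda>x. Wr x - kinf * (1 - (cmod r)\<^sup>2)) = (\<lambda>x. Wr 0 - kinf * (1 - (cmod r)\<^sup>2))" by (intro ext) (metis Wr_const)
    ultimately have "((\<lambda>x::real. Wr 0 - kinf * (1 - (cmod r)\<^sup>2)) \<longlongrightarrow> 0) at_bot" by simp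
    then show ?thesis using tendsto_const_iff[of at_bot] by (metis eq_iff_diff_eq_0 trivial_limit_at_bot_linorder)
  qed
  have "kinf * ((cmod \<tau>)\<^sup>2 + (cmod r)\<^sup>2) = kinf * 1" using Wtop Wbot by (simp add: algebra_simps)
  then have sr: "(cmod \<tau>)\<^sup>2 + (cmod r)\<^sup>2 = 1" using k0 mult_left_cancel by blast

  have cS: "countable S"
  proof -
    have "S \<subseteq> (\<Union>n::nat. S \<inter> {- real n..real n})"
    proof
      fix x assume "x \<in> S"
      obtain n :: nat where "\<bar>x\<bar> \<le> real n" using real_arch_simple by blast
      then have "x \<in> S \<inter> {- real n..real n}" using \<open>x \<in> S\<close> by auto
      then show "x \<in> (\<Union>n::nat. S \<inter> {- real n..real n})" by blast
    qed
    moreover have "countable (\<Union>n::nat. S \<inter> {- real n..real n})"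
    proof (rule countable_UN)
      show "countable (UNIV :: nat set)" by simp
      fix n :: nat
      show "countable (S \<inter> {- real n..real n})" by (rule countable_finite[OF Sfin])
    qed
    ultimately show ?thesis by (rule countable_subset)
  qed
  have mq: "q \<in> borel_measurable borel"
    by (rule borel_measurable_continuous_countable_exceptions[OF cS])
       (use Scont in \<open>auto intro!: continuous_at_imp_continuous_on\<close>)
  have mJ: "J \<in> borel_measurable borel" using cJ by (rule borel_measurable_continuous_onI)
  have mJ'': "J'' \<in> borel_measurable borel" using J_C2 by (rule borel_measurable_continuous_onI)
  have mFi: "Fi \<in> borel_measurable lborel"
    unfolding Fi_def measurable_lborel1 using mq mJ mJ'' by measurable
  have iFi: "integrable lborel Fi"
    by (rule integrableI_nonneg[OF mFi]) (use fin in \<open>auto simp: Fi_def\<close>)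
  have intFi: "Fi integrable_on {a..b} \<and> integral {a..b} Fi \<le> I" for a b
  proof -
    have si: "set_integrable lborel {a..b} Fi"
      unfolding set_integrable_def by (rule integrable_mult_indicator[OF _ iFi]) simp
    have "(LINT x : {a..b} | lborel. Fi x) \<le> integral\<^sup>L lborel Fi"
      unfolding set_lebesgue_integral_def
      by (rule integral_mono[OF si[unfolded set_integrable_def] iFi])
         (auto simp: Fi_def indicator_def)
    moreover have "integral\<^sup>L lborel Fi = I"
      unfolding I_def by (rule integral_eq_nn_integral[OF mFi]) (simp add: Fi_def)
    ultimately show ?thesis using set_borel_integral_eq_integral[OF si] by simp
  qed

  define P where "P = PP u J"
  define R where "R = RR kinf u du J J'"
  define N where "N x = (cmod (P x - R x))\<^sup>2" for x
  define C0 where "C0 = 4 * (cmod \<tau>)\<^sup>2"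
  have C00: "0 \<le> C0" by (simp add: C0_def)
  have N0: "0 \<le> N x" for x by (simp add: N_def)
  have MN: "(cmod (P x + R x))\<^sup>2 = N x + C0" for x
  proof -
    have "4 * Im (cnj (u x) * du x) / kinf = C0"
      using Wr_const[of x] Wtop k0 unfolding Wr_def C0_def by simp
    then show ?thesis using alg_Wr[where J=J and t=x and k=kinf and u=u and du=du and J'=J', OF J0[of x] k0] by (simp add: N_def P_def R_def)
  qed
  have PRx: "P x - R x = u x * complex_of_real (1 / J x) - (complex_of_real (J x) * du x - complex_of_real (J' x) * u x) * (- \<i> / complex_of_real kinf)" for x
    by (simp add: P_def R_def PP_def RR_def)
  have cP: "continuous_on UNIV P" unfolding P_def PP_def[abs_def]
    using J0 by (intro continuous_intros cu cJ) auto
  have cR: "continuous_on UNIV R" unfolding R_def RR_def[abs_def]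
    using k0 by (intro continuous_intros cu cJ cJ' cdu) auto
  have cN: "continuous_on UNIV N" unfolding N_def[abs_def] by (intro continuous_intros cP cR)
  define \<kappa> where "\<kappa> x = kinf / (J x)\<^sup>2" for x
  define \<Lambda> where "\<Lambda> x = (J x)\<^sup>2 / kinf * (q x + J'' x / J x)" for x
  define N' where "N' x = 2 * Re (cnj (P x - R x) * (\<i> * complex_of_real (\<kappa> x) * R x - \<i> * complex_of_real (\<Lambda> x) * P x))" for x
  have dN: "(N has_real_derivative N' x) (at x)" if "x \<notin> S" for x
  proof -
    have dP: "(P has_vector_derivative (\<i> * complex_of_real (\<kappa> x) * R x)) (at x)"
      unfolding P_def R_def \<kappa>_def by (rule PP_deriv[where u=u and du=du and J=J and J'=J' and t=x, OF du_d[of x] J_d1[of x] J0[of x] k0])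
    have dR: "(R has_vector_derivative (\<i> * complex_of_real (\<Lambda> x) * P x)) (at x)"
      unfolding P_def R_def \<Lambda>_def by (rule RR_deriv[where q=q and u=u and du=du and J=J and J'=J' and J''=J'' and t=x, OF du_d[of x] ddu[OF that] J_d1[of x] J_d2[of x] J0[of x] k0])
    have "((\<lambda>x. P x - R x) has_vector_derivative (\<i> * complex_of_real (\<kappa> x) * R x - \<i> * complex_of_real (\<Lambda> x) * P x)) (at x)"
      by (rule has_vector_derivative_diff[OF dP dR])
    from normsq_deriv[OF this] show ?thesis by (simp add: N_def[abs_def] N'_def)
  qed
  have FiK: "Fi x = \<bar>\<kappa> x - \<Lambda> x\<bar>" for x by (simp add: Fi_def \<kappa>_def \<Lambda>_def abs_minus_commute)
  have bN': "\<bar>N' x\<bar> \<le> Fi x * cmod (P x + R x) * cmod (P x - R x)" for x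
    unfolding N'_def FiK by (rule alg_bound)

  define h where "h \<epsilon> x = ln (sqrt (N x + \<epsilon>) + sqrt (N x + C0 + 2*\<epsilon>))" for \<epsilon> x
  define hd where "hd \<epsilon> x = N' x / (2 * sqrt (N x + \<epsilon>) * sqrt (N x + C0 + 2*\<epsilon>))" for \<epsilon> x
  have main: "h \<epsilon> a - h \<epsilon> b \<le> I / 2" if ab: "a \<le> b" and e: "0 < \<epsilon>" for a b \<epsilon>
  proof -
    have "h \<epsilon> a - h \<epsilon> b \<le> integral {a..b} (\<lambda>x. Fi x / 2)"
    proof (rule ftc_bound[OF Sfin[of a b] ab])
      fix x assume "x \<in> {a<..<b} - S \<inter> {a..b}"
      then have "x \<notin> S" by auto
      from h_deriv[OF dN[OF this] N0 C00 e]
      show "(h \<epsilon> has_real_derivative hd \<epsilon> x) (at x)" by (simp add: h_def[abs_def] hd_def)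
    next
      have pos: "sqrt (N x + \<epsilon>) + sqrt (N x + C0 + 2*\<epsilon>) \<noteq> 0" for x
      proof -
        have "0 < sqrt (N x + \<epsilon>)" using N0[of x] e by simp
        moreover have "0 \<le> sqrt (N x + C0 + 2*\<epsilon>)" using N0[of x] e C00 by simp
        ultimately show ?thesis by linarith
      qed
      have "continuous_on UNIV (h \<epsilon>)" unfolding h_def[abs_def]
        by (intro continuous_intros cN) (use pos in auto)
      then show "continuous_on {a..b} (h \<epsilon>)" by (rule continuous_on_subset) simp
    next
      fix x assume "x \<in> {a..b} - S \<inter> {a..b}"
      show "\<bar>hd \<epsilon> x\<bar> \<le> Fi x / 2" unfolding hd_def
        by (rule h_bound[OF bN']) (use MN[of x] C00 e in \<open>auto simp: N_def Fi_def\<close>)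
    next
      show "0 \<le> Fi x / 2" for x by (simp add: Fi_def)
      show "(\<lambda>x. Fi x / 2) integrable_on {a..b}" using intFi[of a b] by (intro integrable_on_divide) simp
    qed
    also have "integral {a..b} (\<lambda>x. Fi x / 2) = integral {a..b} Fi / 2"
      using has_integral_divide[OF integrable_integral[OF conjunct1[OF intFi[of a b]]], of 2]
      by (simp add: integral_unique)
    also have "\<dots> \<le> I / 2" using intFi[of a b] by simp
    finally show ?thesis .
  qed

  have mvt: "\<exists>z. a < z \<and> z < a + 1 \<and> J (a + 1) - J a = J' z" for a :: real
  proof -
    obtain z where "a < z" "z < a + 1" "J (a + 1) - J a = (a + 1 - a) * J' z"
      using MVT2[of a "a+1" J J'] J_d1 by auto
    then show ?thesis by auto
  qed
  define xs where "xs n = (SOME z. real n < z \<and> z < real n + 1 \<and> J (real n + 1) - J (real n) = J' z)" for n :: nat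
  define ys where "ys n = (SOME z. - real n - 1 < z \<and> z < - real n - 1 + 1 \<and> J (- real n - 1 + 1) - J (- real n - 1) = J' z)" for n :: nat
  have xs: "real n < xs n \<and> xs n < real n + 1 \<and> J (real n + 1) - J (real n) = J' (xs n)" for n
    unfolding xs_def by (rule someI_ex[OF mvt])
  have ys0: "- real n - 1 < ys n \<and> ys n < - real n - 1 + 1 \<and> J (- real n - 1 + 1) - J (- real n - 1) = J' (ys n)" for n
    unfolding ys_def by (rule someI_ex[OF mvt])
  have ys: "- real n - 1 < ys n \<and> ys n < - real n \<and> J (- real n) - J (- real n + (- 1)) = J' (ys n)" for n
    using ys0[of n] by simp
  have rn_top: "filterlim (\<lambda>n::nat. real n) at_top sequentially" by (rule filterlim_real_sequentially)
  have rn1_top: "filterlim (\<lambda>n::nat. real n + 1) at_top sequentially"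
    by (rule filterlim_compose[OF shift_top rn_top])
  have mrn_bot: "filterlim (\<lambda>n::nat. - real n) at_bot sequentially"
    using filterlim_uminus_at_top[THEN iffD1, OF rn_top] by simp
  have mrn1_bot: "filterlim (\<lambda>n::nat. - real n + (- 1)) at_bot sequentially"
    by (rule filterlim_compose[OF shift_bot mrn_bot])
  have xs_top: "filterlim xs at_top sequentially"
  proof (rule filterlim_at_top_mono[OF rn_top])
    show "eventually (\<lambda>n. real n \<le> xs n) sequentially"
      by (intro always_eventually allI) (use xs in \<open>auto intro: less_imp_le\<close>)
  qed
  have ys_bot: "filterlim ys at_bot sequentially"
  proof -
    have "filterlim (\<lambda>n. - ys n) at_top sequentially"
    proof (rule filterlim_at_top_mono[OF rn_top])
      show "eventually (\<lambda>n. real n \<le> - ys n) sequentially"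
      proof (intro always_eventually allI)
        fix n show "real n \<le> - ys n" using ys[of n] by linarith
      qed
    qed
    from filterlim_uminus_at_top[THEN iffD1, OF this] show ?thesis by simp
  qed
  have Jxs: "((\<lambda>n. J (xs n)) \<longlongrightarrow> 1) sequentially" by (rule filterlim_compose[OF J_top xs_top])
  have Jys: "((\<lambda>n. J (ys n)) \<longlongrightarrow> 1) sequentially" by (rule filterlim_compose[OF J_bot ys_bot])
  have J'xs: "((\<lambda>n. J' (xs n)) \<longlongrightarrow> 0) sequentially"
  proof -
    have "((\<lambda>n. J (real n + 1) - J (real n)) \<longlongrightarrow> 1 - 1) sequentially"
      by (intro tendsto_diff filterlim_compose[OF J_top rn1_top] filterlim_compose[OF J_top rn_top])
    then show ?thesis using xs by simp
  qed
  have J'ys: "((\<lambda>n. J' (ys n)) \<longlongrightarrow> 0) sequentially"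
  proof -
    have "((\<lambda>n. J (- real n) - J (- real n + (- 1))) \<longlongrightarrow> 1 - 1) sequentially"
      by (intro tendsto_diff filterlim_compose[OF J_bot mrn1_bot] filterlim_compose[OF J_bot mrn_bot])
    then show ?thesis using ys by simp
  qed

  have Nxs: "((\<lambda>n. N (xs n)) \<longlongrightarrow> 0) sequentially"
  proof -
    have "((\<lambda>n. (P (xs n) - R (xs n)) - (f0t (xs n) + \<i> / complex_of_real kinf * f1t (xs n))) \<longlongrightarrow> 0) sequentially"
      unfolding PRx
      by (rule PR_lim[OF filterlim_compose[OF utop xs_top] filterlim_compose[OF dutop xs_top] Jxs J'xs nf0t nf1t J0 k0])
    moreover have "f0t x + \<i> / complex_of_real kinf * f1t x = 0" for x
      using k0 by (simp add: f0t_def f1t_def field_simps)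
    ultimately have "((\<lambda>n. P (xs n) - R (xs n)) \<longlongrightarrow> 0) sequentially" by simp
    then have "((\<lambda>n. (cmod (P (xs n) - R (xs n)))\<^sup>2) \<longlongrightarrow> (cmod 0)\<^sup>2) sequentially"
      by (intro tendsto_intros)
    then show ?thesis by (simp add: N_def)
  qed
  have Nys: "((\<lambda>n. N (ys n)) \<longlongrightarrow> (2 * cmod r)\<^sup>2) sequentially"
  proof -
    have D: "((\<lambda>n. (P (ys n) - R (ys n)) - (f0b (ys n) + \<i> / complex_of_real kinf * f1b (ys n))) \<longlongrightarrow> 0) sequentially"
      unfolding PRx
      by (rule PR_lim[OF filterlim_compose[OF ubot ys_bot] filterlim_compose[OF dubot ys_bot] Jys J'ys nf0b nf1b J0 k0])
    have e2: "f0b x + \<i> / complex_of_real kinf * f1b x = 2 * r * exm x" for x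
      using k0 by (simp add: f0b_def f1b_def field_simps)
    have "((\<lambda>n. cmod (P (ys n) - R (ys n)) - 2 * cmod r) \<longlongrightarrow> 0) sequentially"
    proof (rule Lim_null_comparison)
      show "eventually (\<lambda>n. norm (cmod (P (ys n) - R (ys n)) - 2 * cmod r)
              \<le> cmod ((P (ys n) - R (ys n)) - (f0b (ys n) + \<i> / complex_of_real kinf * f1b (ys n)))) sequentially"
      proof (intro always_eventually allI)
        fix n
        have "cmod (2 * r * exm (ys n)) = 2 * cmod r" by (simp add: norm_mult nexm)
        then show "norm (cmod (P (ys n) - R (ys n)) - 2 * cmod r)
              \<le> cmod ((P (ys n) - R (ys n)) - (f0b (ys n) + \<i> / complex_of_real kinf * f1b (ys n)))"
          unfolding e2 real_norm_def by (metis norm_triangle_ineq3)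
      qed
      show "((\<lambda>n. cmod ((P (ys n) - R (ys n)) - (f0b (ys n) + \<i> / complex_of_real kinf * f1b (ys n)))) \<longlongrightarrow> 0) sequentially"
        using tendsto_norm[OF D] by simp
    qed
    then have "((\<lambda>n. cmod (P (ys n) - R (ys n)) - 2 * cmod r + 2 * cmod r) \<longlongrightarrow> 0 + 2 * cmod r) sequentially"
      by (intro tendsto_add tendsto_const)
    then have "((\<lambda>n. cmod (P (ys n) - R (ys n))) \<longlongrightarrow> 2 * cmod r) sequentially" by simp
    then have "((\<lambda>n. (cmod (P (ys n) - R (ys n)))\<^sup>2) \<longlongrightarrow> (2 * cmod r)\<^sup>2) sequentially"
      by (intro tendsto_intros)
    then show ?thesis by (simp add: N_def)
  qed

  define \<rho> where "\<rho> = cmod r"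
  define s where "s = cmod \<tau>"
  have epsineq: "sqrt ((2*\<rho>)\<^sup>2 + \<epsilon>) + sqrt ((2*\<rho>)\<^sup>2 + C0 + 2*\<epsilon>) \<le> exp (I/2) * (sqrt \<epsilon> + sqrt (C0 + 2*\<epsilon>))"
    if e: "0 < \<epsilon>" for \<epsilon>
  proof -
    define A where "A = sqrt ((2*\<rho>)\<^sup>2 + \<epsilon>) + sqrt ((2*\<rho>)\<^sup>2 + C0 + 2*\<epsilon>)"
    define B where "B = sqrt \<epsilon> + sqrt (C0 + 2*\<epsilon>)"
    have p0: "0 \<le> (2*\<rho>)\<^sup>2" by (rule zero_le_power2)
    have p1: "0 < (2*\<rho>)\<^sup>2 + \<epsilon>" using p0 e by linarith
    have p2: "0 \<le> (2*\<rho>)\<^sup>2 + C0 + 2*\<epsilon>" using p0 e C00 by linarith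
    have A0: "0 < A" unfolding A_def using real_sqrt_gt_zero[OF p1] real_sqrt_ge_zero[OF p2] by linarith
    have B0: "0 < B" using e C00 unfolding B_def by (intro add_pos_nonneg) auto
    have l1: "((\<lambda>n. h \<epsilon> (ys n)) \<longlongrightarrow> ln A) sequentially"
      unfolding h_def A_def \<rho>_def using A0[unfolded A_def \<rho>_def]
      by (intro tendsto_intros Nys) auto
    have l2: "((\<lambda>n. h \<epsilon> (xs n)) \<longlongrightarrow> ln B) sequentially"
    proof -
      have "((\<lambda>n. h \<epsilon> (xs n)) \<longlongrightarrow> ln (sqrt (0 + \<epsilon>) + sqrt (0 + C0 + 2*\<epsilon>))) sequentially"
        unfolding h_def using B0[unfolded B_def]
        by (intro tendsto_intros Nxs) auto
      then show ?thesis by (simp add: B_def)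
    qed
    have "ln A - ln B \<le> I / 2"
    proof (rule tendsto_le[OF trivial_limit_sequentially tendsto_const tendsto_diff[OF l1 l2]])
      show "eventually (\<lambda>n. h \<epsilon> (ys n) - h \<epsilon> (xs n) \<le> I / 2) sequentially"
      proof (intro always_eventually allI main e)
        fix n
        show "ys n \<le> xs n" using xs[of n] ys[of n] by linarith
      qed
    qed
    then have "ln A \<le> ln B + I / 2" by simp
    then have "exp (ln A) \<le> exp (ln B + I/2)" by simp
    then have "A \<le> B * exp (I/2)" using A0 B0 by (simp add: exp_add)
    then show ?thesis by (simp add: A_def B_def mult.commute)
  qed
  have lim1: "1 + \<rho> \<le> exp (I/2) * s"
  proof -
    have C0s: "C0 = (2 * s)\<^sup>2" by (simp add: C0_def s_def power2_eq_square)
    have ssr: "s\<^sup>2 + \<rho>\<^sup>2 = 1" using sr by (simp add: s_def \<rho>_def)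
    have lA: "((\<lambda>\<epsilon>. sqrt ((2*\<rho>)\<^sup>2 + \<epsilon>) + sqrt ((2*\<rho>)\<^sup>2 + C0 + 2*\<epsilon>))
              \<longlongrightarrow> sqrt ((2*\<rho>)\<^sup>2 + 0) + sqrt ((2*\<rho>)\<^sup>2 + C0 + 2*0)) (at_right 0)"
      by (intro tendsto_intros)
    have lB: "((\<lambda>\<epsilon>. exp (I/2) * (sqrt \<epsilon> + sqrt (C0 + 2*\<epsilon>)))
              \<longlongrightarrow> exp (I/2) * (sqrt 0 + sqrt (C0 + 2*0))) (at_right 0)"
      by (intro tendsto_intros)
    have "sqrt ((2*\<rho>)\<^sup>2 + 0) + sqrt ((2*\<rho>)\<^sup>2 + C0 + 2*0) \<le> exp (I/2) * (sqrt 0 + sqrt (C0 + 2*0))"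
      by (rule tendsto_le[OF trivial_limit_at_right_real lB lA])
         (use eventually_at_right_less[of 0] epsineq in \<open>auto elim: eventually_mono\<close>)
    moreover have "sqrt ((2*\<rho>)\<^sup>2 + 0) = 2 * \<rho>" by (simp only: add_0_right real_sqrt_abs) (simp add: \<rho>_def)
    moreover have "(2*\<rho>)\<^sup>2 + C0 + 2*0 = 2\<^sup>2" using ssr C0s by (simp add: power2_eq_square algebra_simps)
    moreover have "sqrt (C0 + 2*0) = 2 * s" unfolding C0s by (simp only: mult_zero_right add_0_right real_sqrt_abs) (simp add: s_def)
    ultimately have "2 * \<rho> + 2 \<le> exp (I/2) * (2 * s)" by simp
    then show ?thesis by simp
  qed
  have "(sech (I/2))\<^sup>2 \<le> s\<^sup>2"
    by (rule final_real[OF _ _ _ lim1]) (use sr in \<open>auto simp: s_def \<rho>_def\<close>)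
  then show "(cmod \<tau>)\<^sup>2 \<ge> (sech ((1/2) * enn2real (\<integral>\<^sup>+ x. ennreal \<bar>(J x)\<^sup>2 / kinf * (q x + J'' x / J x) - kinf / (J x)\<^sup>2\<bar> \<partial>lborel)))\<^sup>2"
    by (simp add: I_def Fi_def s_def)
qed

end
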